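(* Let $D>0$ be a square-free integer, let $p$ be an odd prime with $\left(\frac{-D}{p}\right)=1$, and let $\alpha\ge 1$ be an integer. Let $x_0,y_0$ be integers with $\gcd(x_0,y_0)=1$ and $x_0^2+Dy_0^2=p^{2\alpha}$. Suppose $c,d$ are integers with $\gcd(c,d)=1$ and $p^{2\alpha}\mid c^2+Dd^2$. Then exactly one of the following holds in $\mathbb{Z}[\sqrt{-D}]$: $x_0+y_0\sqrt{-D}\mid c+d\sqrt{-D}$, or $x_0-y_0\sqrt{-D}\mid c+d\sqrt{-D}$.
   Context: $\left(\frac{\cdot}{p}\right)$ is the Legendre symbol. *)

theory Defs
  imports "HOL-Number_Theory.Number_Theory" "HOL-Computational_Algebra.Squarefree"
begin

text \<open>Divisibility in the ring Z[sqrt(-D)]: the element x + y sqrt(-D) divides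
  c + d sqrt(-D) iff there is u + v sqrt(-D) in Z[sqrt(-D)] with
  (x + y sqrt(-D)) (u + v sqrt(-D)) = c + d sqrt(-D), i.e.
  c = x u - D y v and d = x v + y u.\<close>
definition zsqrt_dvd :: "int \<Rightarrow> int \<Rightarrow> int \<Rightarrow> int \<Rightarrow> int \<Rightarrow> bool" where
  "zsqrt_dvd D x y c d \<longleftrightarrow> (\<exists>u v. c = x * u - D * y * v \<and> d = x * v + y * u)"

end

theory Submission
  imports Defs
begin

lemma zdvd_iff:
  fixes D x y c d N :: int
  assumes N: "N = x^2 + D*y^2" and N0: "N \<noteq> 0" and cop: "coprime N y"
  shows "zsqrt_dvd D x y c d \<longleftrightarrow> N dvd d*x - c*y"
proof
  assume "zsqrt_dvd D x y c d"
  then obtain u v where h: "c = x * u - D * y * v" "d = x * v + y * u"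
    unfolding zsqrt_dvd_def by blast
  have "d*x - c*y = (x*v + y*u)*x - (x*u - D*y*v)*y" using h by simp
  also have "\<dots> = N * v" using N by (simp add: algebra_simps power2_eq_square)
  finally have "d*x - c*y = N * v" .
  then show "N dvd d*x - c*y" by simp
next
  assume "N dvd d*x - c*y"
  then obtain v where v: "d*x - c*y = N*v" by (auto elim: dvdE)
  have "y*(c*x + D*d*y) = d*N - x*(d*x - c*y)" using N by (simp add: algebra_simps power2_eq_square)
  also have "\<dots> = N*(d - x*v)" using v by (simp add: algebra_simps)
  finally have "N dvd y*(c*x + D*d*y)" by (metis dvd_triv_left)
  then have "N dvd c*x + D*d*y" using cop by (simp add: coprime_dvd_mult_right_iff)
  then obtain u where u: "c*x + D*d*y = N*u" by (auto elim: dvdE)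
  have "N*(x*u - D*y*v) = x*(c*x + D*d*y) - D*y*(d*x - c*y)" using u v by (simp add: algebra_simps)
  also have "\<dots> = N*c" using N by (simp add: algebra_simps power2_eq_square)
  finally have e1: "c = x*u - D*y*v" using N0 by simp
  have "N*(x*v + y*u) = x*(d*x - c*y) + y*(c*x + D*d*y)" using u v by (simp add: algebra_simps)
  also have "\<dots> = N*d" using N by (simp add: algebra_simps power2_eq_square)
  finally have e2: "d = x*v + y*u" using N0 by simp
  show "zsqrt_dvd D x y c d" unfolding zsqrt_dvd_def using e1 e2 by blast
qed

theorem lemma3p4:
  fixes D p x0 y0 c d :: int and \<alpha> :: nat
  assumes "D > 0" and "squarefree D"
    and "prime p" and "odd p" and "Legendre (- D) p = 1"
    and "\<alpha> \<ge> 1"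
    and "gcd x0 y0 = 1" and "x0^2 + D * y0^2 = p^(2*\<alpha>)"
    and "gcd c d = 1" and "p^(2*\<alpha>) dvd c^2 + D * d^2"
  shows "(zsqrt_dvd D x0 y0 c d \<or> zsqrt_dvd D x0 (- y0) c d)
         \<and> \<not> (zsqrt_dvd D x0 y0 c d \<and> zsqrt_dvd D x0 (- y0) c d)"
proof -
  define N where "N = p^(2*\<alpha>)"
  have pD: "\<not> p dvd D"
  proof
    assume "p dvd D" then have "p dvd -D" by simp
    then have "[- D = 0] (mod p)" by (simp add: cong_0_iff)
    then have "Legendre (- D) p = 0" unfolding Legendre_def by simp
    then show False using assms(5) by simp
  qed
  have pnu: "\<not> is_unit p" using assms(3) not_prime_unit by blast
  have py: "\<not> p dvd y0"
  proof
    assume h: "p dvd y0"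
    have "p dvd p^(2*\<alpha>)" using assms(6) by simp
    then have "p dvd x0^2 + D*y0^2" using assms(8) by simp
    moreover have "p dvd D*y0^2" using h by (simp add: power2_eq_square)
    ultimately have "p dvd x0^2" using dvd_add_left_iff by blast
    then have "p dvd x0" by (rule prime_dvd_power[OF assms(3)])
    then have "p dvd gcd x0 y0" using h by simp
    then show False using assms(7) pnu by simp
  qed
  have px: "\<not> p dvd x0"
  proof
    assume h: "p dvd x0"
    have "p dvd p^(2*\<alpha>)" using assms(6) by simp
    then have "p dvd x0^2 + D*y0^2" using assms(8) by simp
    moreover have "p dvd x0^2" using h by (simp add: power2_eq_square)
    ultimately have "p dvd D*y0^2" using dvd_add_right_iff by blast
    then have "p dvd y0^2" using pD prime_dvd_mult_iff[OF assms(3)] by blast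
    then have "p dvd y0" by (rule prime_dvd_power[OF assms(3)])
    then show False using py by simp
  qed
  have pd: "\<not> p dvd d"
  proof
    assume h: "p dvd d"
    have "p dvd p^(2*\<alpha>)" using assms(6) by simp
    then have "p dvd c^2 + D*d^2" using assms(10) dvd_trans by blast
    moreover have "p dvd D*d^2" using h by (simp add: power2_eq_square)
    ultimately have "p dvd c^2" using dvd_add_left_iff by blast
    then have "p dvd c" by (rule prime_dvd_power[OF assms(3)])
    then have "p dvd gcd c d" using h by simp
    then show False using assms(9) pnu by simp
  qed
  have p2: "\<not> p dvd 2"
  proof
    assume "p dvd 2" then have "p \<le> 2" using zdvd_imp_le by simp
    moreover have "p \<ge> 2" using prime_ge_2_int[OF assms(3)] .
    ultimately have "p = 2" by simp
    then show False using assms(4) by simp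
  qed
  have p2dx: "\<not> p dvd 2*d*x0" using p2 pd px prime_dvd_mult_iff[OF assms(3)] by simp
  have copy: "coprime N y0" unfolding N_def
    using py assms(3) by (simp add: prime_imp_coprime)
  have copy': "coprime N (-y0)" using copy by simp
  have N0: "N \<noteq> 0" unfolding N_def using assms(3) by auto
  have Neq: "N = x0^2 + D*y0^2" using assms(8) N_def by simp
  have Neq': "N = x0^2 + D*(-y0)^2" using Neq by simp
  have i1: "zsqrt_dvd D x0 y0 c d \<longleftrightarrow> N dvd d*x0 - c*y0"
    using zdvd_iff[OF Neq N0 copy] .
  have i2: "zsqrt_dvd D x0 (-y0) c d \<longleftrightarrow> N dvd d*x0 + c*y0"
    using zdvd_iff[OF Neq' N0 copy'] by simp
  have prod: "(d*x0 - c*y0)*(d*x0 + c*y0) = d^2*N - y0^2*(c^2 + D*d^2)"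
    using Neq by (simp add: algebra_simps power2_eq_square)
  have Nprod: "N dvd (d*x0 - c*y0)*(d*x0 + c*y0)"
    unfolding prod using assms(10) N_def by simp
  have sum: "(d*x0 - c*y0) + (d*x0 + c*y0) = 2*d*x0" by simp
  have notboth: "\<not> (p dvd d*x0 - c*y0 \<and> p dvd d*x0 + c*y0)"
    using p2dx sum by (metis dvd_add)
  have pN: "p dvd N" unfolding N_def using assms(6) by simp
  have one: "N dvd d*x0 - c*y0 \<or> N dvd d*x0 + c*y0"
  proof (cases "p dvd d*x0 - c*y0")
    case True
    then have "\<not> p dvd d*x0 + c*y0" using notboth by blast
    then have "coprime N (d*x0 + c*y0)" unfolding N_def
      using assms(3) by (simp add: prime_imp_coprime)
    then have "N dvd d*x0 - c*y0" using Nprod by (simp add: coprime_dvd_mult_left_iff)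
    then show ?thesis by simp
  next
    case False
    then have "coprime N (d*x0 - c*y0)" unfolding N_def
      using assms(3) by (simp add: prime_imp_coprime)
    then have "N dvd d*x0 + c*y0" using Nprod by (simp add: coprime_dvd_mult_right_iff)
    then show ?thesis by simp
  qed
  have two: "\<not> (N dvd d*x0 - c*y0 \<and> N dvd d*x0 + c*y0)"
  proof
    assume "N dvd d*x0 - c*y0 \<and> N dvd d*x0 + c*y0"
    then have "p dvd d*x0 - c*y0 \<and> p dvd d*x0 + c*y0" using pN dvd_trans by blast
    then show False using notboth by blast
  qed
  show ?thesis using one two i1 i2 by blast
qed

end
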